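(* Let $M$ be a $3$-connected simple matroid with $r(M)\ge 3$, and let $C^*$ be a cocircuit of $M$ of rank $3$. If $C^*$ contains two elements that are not vertically contractible in $M$, then all the elements of $C^*$ that are not vertically contractible in $M$ lie in a common non-trivial line of $M$. Moreover, $C^*$ contains a vertically contractible element of $M$.
   Context: An element $x$ is vertically contractible in $M$ if $\mathrm{si}(M/x)$, the simplification of $M/x$, is $3$-connected. A non-trivial line is a rank-$2$ flat with at least three elements. *)

theory Defs
  imports Main
begin

definition matroid :: "'a set \<Rightarrow> ('a set \<Rightarrow> nat) \<Rightarrow> bool" where
  "matroid E r \<longleftrightarrow> finite E
     \<and> (\<forall>X. X \<subseteq> E \<longrightarrow> r X \<le> card X)
     \<and> (\<forall>X Y. X \<subseteq> Y \<and> Y \<subseteq> E \<longrightarrow> r X \<le> r Y)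
     \<and> (\<forall>X Y. X \<subseteq> E \<and> Y \<subseteq> E \<longrightarrow> r (X \<union> Y) + r (X \<inter> Y) \<le> r X + r Y)"

definition loop :: "'a set \<Rightarrow> ('a set \<Rightarrow> nat) \<Rightarrow> 'a \<Rightarrow> bool" where
  "loop E r x \<longleftrightarrow> x \<in> E \<and> r {x} = 0"

definition simple :: "'a set \<Rightarrow> ('a set \<Rightarrow> nat) \<Rightarrow> bool" where
  "simple E r \<longleftrightarrow> (\<forall>x\<in>E. r {x} = 1) \<and> (\<forall>x\<in>E. \<forall>y\<in>E. x \<noteq> y \<longrightarrow> r {x, y} = 2)"

definition k_separation :: "'a set \<Rightarrow> ('a set \<Rightarrow> nat) \<Rightarrow> nat \<Rightarrow> 'a set \<Rightarrow> bool" where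
  "k_separation E r k X \<longleftrightarrow> X \<subseteq> E \<and> card X \<ge> k \<and> card (E - X) \<ge> k
     \<and> r X + r (E - X) < r E + k"

definition three_connected :: "'a set \<Rightarrow> ('a set \<Rightarrow> nat) \<Rightarrow> bool" where
  "three_connected E r \<longleftrightarrow> (\<forall>k X. 1 \<le> k \<and> k < 3 \<longrightarrow> \<not> k_separation E r k X)"

definition indep :: "'a set \<Rightarrow> ('a set \<Rightarrow> nat) \<Rightarrow> 'a set \<Rightarrow> bool" where
  "indep E r X \<longleftrightarrow> X \<subseteq> E \<and> r X = card X"

definition circuit :: "'a set \<Rightarrow> ('a set \<Rightarrow> nat) \<Rightarrow> 'a set \<Rightarrow> bool" where
  "circuit E r C \<longleftrightarrow> C \<subseteq> E \<and> \<not> indep E r C \<and> (\<forall>D. D \<subset> C \<longrightarrow> indep E r D)"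

definition dual_rank :: "'a set \<Rightarrow> ('a set \<Rightarrow> nat) \<Rightarrow> 'a set \<Rightarrow> nat" where
  "dual_rank E r X = card X + r (E - X) - r E"

definition cocircuit :: "'a set \<Rightarrow> ('a set \<Rightarrow> nat) \<Rightarrow> 'a set \<Rightarrow> bool" where
  "cocircuit E r C \<longleftrightarrow> circuit E (dual_rank E r) C"

definition flat :: "'a set \<Rightarrow> ('a set \<Rightarrow> nat) \<Rightarrow> 'a set \<Rightarrow> bool" where
  "flat E r F \<longleftrightarrow> F \<subseteq> E \<and> (\<forall>e \<in> E - F. r (insert e F) > r F)"

definition nontrivial_line :: "'a set \<Rightarrow> ('a set \<Rightarrow> nat) \<Rightarrow> 'a set \<Rightarrow> bool" where
  "nontrivial_line E r L \<longleftrightarrow> flat E r L \<and> r L = 2 \<and> card L \<ge> 3"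

definition contract_rank :: "('a set \<Rightarrow> nat) \<Rightarrow> 'a \<Rightarrow> 'a set \<Rightarrow> nat" where
  "contract_rank r x X = r (insert x X) - r {x}"

text \<open>Simplification: the restriction of M to a set S containing exactly one
  element from each parallel class of non-loops (S chosen by choice; the
  result is unique up to isomorphism).\<close>
definition simp_set :: "'a set \<Rightarrow> ('a set \<Rightarrow> nat) \<Rightarrow> 'a set" where
  "simp_set E r = (SOME S. S \<subseteq> E \<and> (\<forall>x\<in>S. r {x} = 1)
      \<and> (\<forall>x\<in>S. \<forall>y\<in>S. x \<noteq> y \<longrightarrow> r {x, y} = 2)
      \<and> (\<forall>x\<in>E. r {x} = 1 \<longrightarrow> (\<exists>y\<in>S. r {x, y} = 1)))"

definition vert_contractible :: "'a set \<Rightarrow> ('a set \<Rightarrow> nat) \<Rightarrow> 'a \<Rightarrow> bool" where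
  "vert_contractible E r x \<longleftrightarrow> x \<in> E \<and>
     three_connected (simp_set (E - {x}) (contract_rank r x)) (contract_rank r x)"

end

theory Submission
  imports Defs
begin

locale mat =
  fixes E :: "'a set" and r :: "'a set \<Rightarrow> nat"
  assumes M: "matroid E r"
begin

lemma fin: "finite E" using M unfolding matroid_def by blast
lemma rcard: "X \<subseteq> E \<Longrightarrow> r X \<le> card X" using M unfolding matroid_def by blast
lemma mono: "X \<subseteq> Y \<Longrightarrow> Y \<subseteq> E \<Longrightarrow> r X \<le> r Y" using M unfolding matroid_def by blast
lemma sub: "X \<subseteq> E \<Longrightarrow> Y \<subseteq> E \<Longrightarrow> r (X \<union> Y) + r (X \<inter> Y) \<le> r X + r Y"
  using M unfolding matroid_def by blast

lemma r_empty: "r {} = 0" using rcard[of "{}"] by simp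

lemma r_single: "e \<in> E \<Longrightarrow> r {e} \<le> 1" using rcard[of "{e}"] by simp

lemma r_insert: assumes "X \<subseteq> E" "e \<in> E" shows "r (insert e X) \<le> r X + 1"
proof -
  have "r (X \<union> {e}) + r (X \<inter> {e}) \<le> r X + r {e}" using sub[of X "{e}"] assms by auto
  thus ?thesis using r_single[OF assms(2)] by simp
qed

lemma r_le_E: "X \<subseteq> E \<Longrightarrow> r X \<le> r E" using mono by auto

lemma closure_union:
  assumes "S \<subseteq> E" "T \<subseteq> E" "\<forall>e\<in>T. r (insert e S) = r S"
  shows "r (S \<union> T) = r S"
proof -
  have "finite T" using assms(2) fin finite_subset by blast
  thus ?thesis using assms
  proof (induction T rule: finite_induct)
    case empty then show ?case by simp
  next
    case (insert t T)
    have IH: "r (S \<union> T) = r S" using insert by auto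
    have t: "r (insert t S) = r S" using insert by auto
    have e: "(S \<union> T) \<union> insert t S = S \<union> insert t T" by auto
    have "r ((S \<union> T) \<union> insert t S) + r ((S \<union> T) \<inter> insert t S) \<le> r (S \<union> T) + r (insert t S)"
      using sub[of "S \<union> T" "insert t S"] insert by auto
    hence 1: "r (S \<union> insert t T) + r ((S \<union> T) \<inter> insert t S) \<le> r (S \<union> T) + r (insert t S)"
      unfolding e .
    have 2: "r S \<le> r ((S \<union> T) \<inter> insert t S)" using mono[of S "(S \<union> T) \<inter> insert t S"] insert by auto
    have 3: "r S \<le> r (S \<union> insert t T)" using mono[of S "S \<union> insert t T"] insert by auto
    show ?case using 1 2 3 IH t by linarith
  qed
qed

end

locale M3 = mat +
  fixes C :: "'a set"
  assumes TC: "three_connected E r"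
    and SM: "simple E r"
    and CC: "cocircuit E r C"
    and RC: "r C = 3"
begin

definition "H = E - C"

lemma C1: assumes "X \<subseteq> E" "X \<noteq> {}" "E - X \<noteq> {}" shows "r E + 1 \<le> r X + r (E - X)"
proof -
  have "finite X" "finite (E - X)" using assms fin finite_subset by auto
  hence "card X \<ge> 1" "card (E - X) \<ge> 1" using assms by (auto simp: Suc_le_eq card_gt_0_iff)
  moreover have "\<not> k_separation E r 1 X" using TC unfolding three_connected_def by auto
  ultimately show ?thesis using assms(1) unfolding k_separation_def by auto
qed

lemma C2: assumes "X \<subseteq> E" "card X \<ge> 2" "card (E - X) \<ge> 2" shows "r E + 2 \<le> r X + r (E - X)"
proof -
  have "\<not> k_separation E r 2 X" using TC unfolding three_connected_def by auto
  thus ?thesis using assms unfolding k_separation_def by auto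
qed

lemma r1: "x \<in> E \<Longrightarrow> r {x} = 1" using SM unfolding simple_def by auto
lemma r2: "x \<in> E \<Longrightarrow> y \<in> E \<Longrightarrow> x \<noteq> y \<Longrightarrow> r {x, y} = 2" using SM unfolding simple_def by auto

lemma CE: "C \<subseteq> E" using CC unfolding cocircuit_def circuit_def by auto

lemma cardC: "card C \<ge> 3" using rcard[OF CE] RC by simp

lemma rH: "r H < r E"
proof -
  have "\<not> indep E (dual_rank E r) C" using CC unfolding cocircuit_def circuit_def by auto
  hence "card C + r (E - C) - r E \<noteq> card C" using CE unfolding indep_def dual_rank_def by auto
  moreover have "r (E - C) \<le> r E" using r_le_E by auto
  ultimately show ?thesis unfolding H_def by linarith
qed

lemma rHx: assumes "x \<in> C" shows "r (insert x H) = r E"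
proof -
  have "C - {x} \<subset> C" using assms by auto
  hence "indep E (dual_rank E r) (C - {x})" using CC unfolding cocircuit_def circuit_def by auto
  hence d: "card (C - {x}) + r (E - (C - {x})) - r E = card (C - {x})"
    unfolding indep_def dual_rank_def by auto
  have "card (C - {x}) = card C - 1" using card_Diff_singleton[OF assms] .
  hence "card (C - {x}) \<ge> 2" using cardC by linarith
  hence "r (E - (C - {x})) = r E" using d r_le_E[of "E - (C - {x})"] by linarith
  moreover have "E - (C - {x}) = insert x H" using assms CE unfolding H_def by auto
  ultimately show ?thesis by simp
qed

lemma HE: "H \<subseteq> E" unfolding H_def by auto

lemma rH_eq: "r H + 1 = r E"
proof -
  obtain x where "x \<in> C" using cardC by (metis card.empty ex_in_conv not_numeral_le_zero)
  thus ?thesis using rHx[of x] r_insert[of H x] HE CE rH by auto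
qed

lemma Hadd: assumes "S \<subseteq> H" "x \<in> C" shows "r (insert x S) = r S + 1"
proof -
  have "r (insert x S \<union> H) + r (insert x S \<inter> H) \<le> r (insert x S) + r H"
    using sub[of "insert x S" H] assms HE CE by auto
  moreover have "insert x S \<union> H = insert x H" "insert x S \<inter> H = S" using assms unfolding H_def by auto
  ultimately have "r (insert x S) \<ge> r S + 1" using rHx[OF assms(2)] rH_eq by simp
  thus ?thesis using r_insert[of S x] assms HE CE by auto
qed

end

context M3 begin

definition sides :: "'a \<Rightarrow> 'a set \<Rightarrow> 'a set \<Rightarrow> bool" where
  "sides x A B \<longleftrightarrow> A \<subseteq> E \<and> B \<subseteq> E \<and> A \<union> B = E \<and> A \<inter> B = {x}
     \<and> 3 \<le> r A \<and> 3 \<le> r B \<and> r A + r B \<le> r E + 2"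

definition "bad x \<longleftrightarrow> (\<exists>A B. sides x A B)"

lemma sides_sym: "sides x A B \<Longrightarrow> sides x B A"
  unfolding sides_def by auto

lemma finE: "X \<subseteq> E \<Longrightarrow> finite X" using fin finite_subset by blast

lemma L2L_half: assumes "x \<in> C" "sides x A B" shows "r (B \<inter> C) \<le> 2"
proof -
  have AE: "A \<subseteq> E" and BE: "B \<subseteq> E" and U: "A \<union> B = E" and I: "A \<inter> B = {x}"
    and rA: "3 \<le> r A" and rB: "3 \<le> r B" and S: "r A + r B \<le> r E + 2"
    using assms(2) unfolding sides_def by auto
  have xA: "x \<in> A" using I by auto
  have CE': "C \<subseteq> E" using CE .
  define HA where "HA = A \<inter> H"
  have HAE: "HA \<subseteq> E" unfolding HA_def H_def by auto
  have eq: "E - HA = B \<union> C" using U I CE assms(1) unfolding HA_def H_def by auto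
  have sBC: "r (B \<union> C) + r (B \<inter> C) \<le> r B + r C" using sub[OF BE CE] .
  show ?thesis
  proof (cases "card HA \<ge> 2")
    case True
    have s1: "r (A \<union> H) + r (A \<inter> H) \<le> r A + r H" using sub[OF AE HE] .
    have "r (insert x H) \<le> r (A \<union> H)" using mono[of "insert x H" "A \<union> H"] xA AE HE by auto
    hence a: "r HA + 1 \<le> r A" using s1 rHx[OF assms(1)] rH_eq unfolding HA_def by linarith
    have "card C \<le> card (E - HA)" using card_mono[of "E - HA" C] finE[of "E - HA"] eq by auto
    hence "card (E - HA) \<ge> 2" using cardC by linarith
    hence "r E + 2 \<le> r HA + r (E - HA)" using C2[OF HAE True] by auto
    thus ?thesis using a sBC eq RC S by simp
  next
    case False
    show ?thesis
    proof (rule ccontr)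
      assume "\<not> r (B \<inter> C) \<le> 2"
      hence "r (B \<union> C) \<le> r B" using sBC RC by linarith
      hence rEH: "r (E - HA) \<le> r B" using eq by simp
      have "finite HA" using finE[OF HAE] .
      moreover have "card HA = 0 \<or> card HA = 1" using False by linarith
      ultimately have "HA = {} \<or> (\<exists>h. HA = {h})" using card_1_singleton_iff by auto
      thus False
      proof
        assume "HA = {}" thus False using rEH S rA by simp
      next
        assume "\<exists>h. HA = {h}"
        then obtain h where h: "HA = {h}" by auto
        have "h \<in> E" using h HAE by auto
        moreover have "E - {h} \<noteq> {}"
        proof -
          have "C \<noteq> {}" using cardC by auto
          moreover have "C \<subseteq> E - {h}" using CE h unfolding HA_def H_def by auto
          ultimately show ?thesis by auto
        qed
        ultimately have "r E + 1 \<le> r {h} + r (E - {h})" using C1[of "{h}"] by auto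
        thus False using r1[of h] \<open>h \<in> E\<close> rEH h S rA by simp
      qed
    qed
  qed
qed

lemma L2L: assumes "x \<in> C" "sides x A B"
  shows "r (A \<inter> C) = 2" "r (B \<inter> C) = 2"
proof -
  have a: "r (A \<inter> C) \<le> 2" using L2L_half[OF assms(1) sides_sym[OF assms(2)]] .
  have b: "r (B \<inter> C) \<le> 2" using L2L_half[OF assms] .
  have AE: "A \<subseteq> E" and BE: "B \<subseteq> E" and U: "A \<union> B = E" and I: "A \<inter> B = {x}"
    using assms(2) unfolding sides_def by auto
  have "r ((A \<inter> C) \<union> (B \<inter> C)) + r ((A \<inter> C) \<inter> (B \<inter> C)) \<le> r (A \<inter> C) + r (B \<inter> C)"
    using sub[of "A \<inter> C" "B \<inter> C"] AE BE by auto
  moreover have "(A \<inter> C) \<union> (B \<inter> C) = C" "(A \<inter> C) \<inter> (B \<inter> C) = {x}" using U I CE assms(1) by auto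
  ultimately have "r C + r {x} \<le> r (A \<inter> C) + r (B \<inter> C)" by simp
  hence "4 \<le> r (A \<inter> C) + r (B \<inter> C)" using RC r1[of x] CE assms(1) by auto
  thus "r (A \<inter> C) = 2" "r (B \<inter> C) = 2" using a b by auto
qed

lemma coll: assumes "x \<in> C" "sides x A B" "y \<in> A \<inter> C" "z \<in> A \<inter> C"
  shows "r {x, y, z} \<le> 2"
proof -
  have "x \<in> A" using assms(2) unfolding sides_def by auto
  hence "{x,y,z} \<subseteq> A \<inter> C" using assms by auto
  moreover have "A \<inter> C \<subseteq> E" using CE by auto
  ultimately have "r {x,y,z} \<le> r (A \<inter> C)" using mono[of "{x,y,z}" "A \<inter> C"] by blast
  thus ?thesis using L2L(1)[OF assms(1,2)] by simp
qed

end

context M3 begin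

lemma card_ge: "X \<subseteq> E \<Longrightarrow> k \<le> r X \<Longrightarrow> k \<le> card X" using rcard[of X] by linarith

lemma card_ge2: "A \<subseteq> X \<Longrightarrow> X \<subseteq> E \<Longrightarrow> k \<le> r A \<Longrightarrow> k \<le> card X"
  using mono[of A X] card_ge[of X k] by linarith

lemma factC: assumes "x \<in> C" "sides x A B"
  shows "r (A - {x}) = r A" "r A + r B = r E + 2"
proof -
  have AE: "A \<subseteq> E" and BE: "B \<subseteq> E" and U: "A \<union> B = E" and I: "A \<inter> B = {x}"
    and rA: "3 \<le> r A" and rB: "3 \<le> r B" and S: "r A + r B \<le> r E + 2"
    using assms(2) unfolding sides_def by auto
  have xA: "x \<in> A" using I by auto
  have "card A \<ge> 3" using card_ge[OF AE rA] .
  moreover have "card (A - {x}) = card A - 1" using card_Diff_singleton[OF xA] .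
  ultimately have c1: "card (A - {x}) \<ge> 2" by linarith
  have c2: "card B \<ge> 2" using card_ge[OF BE rB] by linarith
  have e: "E - (A - {x}) = B" using U I by auto
  have "r E + 2 \<le> r (A - {x}) + r (E - (A - {x}))" using C2[of "A - {x}"] AE c1 c2 e by auto
  hence "r E + 2 \<le> r (A - {x}) + r B" using e by simp
  moreover have "r (A - {x}) \<le> r A" using mono[of "A - {x}" A] AE by auto
  ultimately show "r (A - {x}) = r A" "r A + r B = r E + 2" using S by linarith+
qed

lemma triad:
  assumes Cx: "C = {x, y, z}" and d: "x \<noteq> y" "y \<noteq> z" "x \<noteq> z"
    and sx: "sides x Ax Bx" and yAx: "y \<in> Ax" and zBx: "z \<in> Bx"
    and sy: "sides y Ay By" and xAy: "x \<in> Ay" and zBy: "z \<in> By"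
  shows "card (Ax \<inter> H) = 2 \<and> card (Ay \<inter> H) = 2 \<and> (\<exists>w\<in>H. r (insert x (insert y {w})) \<le> 2)"
proof -
  have AxE: "Ax \<subseteq> E" and BxE: "Bx \<subseteq> E" and Ux: "Ax \<union> Bx = E" and Ix: "Ax \<inter> Bx = {x}"
    and rAx: "3 \<le> r Ax" and rBx: "3 \<le> r Bx" using sx unfolding sides_def by auto
  have AyE: "Ay \<subseteq> E" and ByE: "By \<subseteq> E" and Uy: "Ay \<union> By = E" and Iy: "Ay \<inter> By = {y}"
    and rAy: "3 \<le> r Ay" and rBy: "3 \<le> r By" using sy unfolding sides_def by auto
  have xC: "x \<in> C" and yC: "y \<in> C" and zC: "z \<in> C" using Cx by auto
  have Hd: "H = E - {x, y, z}" unfolding H_def using Cx by simp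
  define PX where "PX = Ax \<inter> H"
  define QX where "QX = Bx \<inter> H"
  define PY where "PY = Ay \<inter> H"
  define QY where "QY = By \<inter> H"
  define W where "W = PX \<inter> PY"
  define W1 where "W1 = PX \<inter> QY"
  define W2 where "W2 = QX \<inter> PY"
  define W3 where "W3 = QX \<inter> QY"
  define Q where "Q = insert z W3"
  have xAx: "x \<in> Ax" "x \<in> Bx" "y \<in> Ay" "y \<in> By" using Ix Iy by blast+
  have zAx: "z \<notin> Ax" using Ix zBx d by (metis IntI singletonD)
  have zAy: "z \<notin> Ay" using Iy zBy d by (metis IntI singletonD)
  have yBx: "y \<notin> Bx" using Ix yAx d by (metis IntI singletonD)
  have xBy: "x \<notin> By" using Iy xAy d by (metis IntI singletonD)
  note mem = xAx zAx zAy yBx xBy yAx zBx xAy zBy d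
  have subH: "PX \<subseteq> H" "QX \<subseteq> H" "PY \<subseteq> H" "QY \<subseteq> H" "W \<subseteq> H" "W1 \<subseteq> H" "W2 \<subseteq> H" "W3 \<subseteq> H"
    unfolding PX_def QX_def PY_def QY_def W_def W1_def W2_def W3_def by auto
  have HE': "H \<subseteq> E" using HE .
  have e1: "Ax - {x} = insert y PX" using mem AxE unfolding PX_def Hd by auto
  have e2: "Bx - {x} = insert z QX" using mem BxE unfolding QX_def Hd by auto
  have e3: "Ay - {y} = insert x PY" using mem AyE unfolding PY_def Hd by auto
  have e4: "By - {y} = insert z QY" using mem ByE unfolding QY_def Hd by auto
  have fx1: "r Ax = r PX + 1" using factC(1)[OF xC sx] e1 Hadd[OF _ yC, of PX] subH by simp
  have fx2: "r Bx = r QX + 1" using factC(1)[OF xC sides_sym[OF sx]] e2 Hadd[OF _ zC, of QX] subH by simp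
  have fy1: "r Ay = r PY + 1" using factC(1)[OF yC sy] e3 Hadd[OF _ xC, of PY] subH by simp
  have fy2: "r By = r QY + 1" using factC(1)[OF yC sides_sym[OF sy]] e4 Hadd[OF _ zC, of QY] subH by simp
  have sumx: "r Ax + r Bx = r E + 2" using factC(2)[OF xC sx] .
  have sumy: "r Ay + r By = r E + 2" using factC(2)[OF yC sy] .
  have cells: "PX = W \<union> W1" "QX = W2 \<union> W3" "PY = W \<union> W2" "QY = W1 \<union> W3"
    using Ux Uy Ix Iy unfolding W_def W1_def W2_def W3_def PX_def QX_def PY_def QY_def Hd by auto
  have s1: "Ax \<inter> Ay = insert x (insert y W)" using mem AxE AyE
    unfolding W_def PX_def PY_def Hd by auto
  have s2: "Ax \<union> Ay = E - Q" using mem AxE AyE Ux Uy Ix Iy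
    unfolding Q_def W3_def QX_def QY_def Hd by auto
  have s3: "Bx \<inter> By = Q" using mem BxE ByE
    unfolding Q_def W3_def QX_def QY_def Hd by auto
  have s4: "Bx \<union> By = E - W" using mem BxE ByE Ux Uy Ix Iy
    unfolding W_def PX_def PY_def Hd by auto
  have s5: "Ax \<inter> By = insert y W1" using mem AxE ByE
    unfolding W1_def PX_def QY_def Hd by auto
  have s6: "Ax \<union> By = E - W2" using mem AxE ByE Ux Uy Ix Iy
    unfolding W2_def QX_def PY_def Hd by auto
  have s7: "Bx \<inter> Ay = insert x W2" using mem BxE AyE
    unfolding W2_def QX_def PY_def Hd by auto
  have s8: "Bx \<union> Ay = E - W1" using mem BxE AyE Ux Uy Ix Iy
    unfolding W1_def PX_def QY_def Hd by auto
  have K1: "r (insert x (insert y W)) + r (E - Q) + r Q + r (E - W) \<le> 2 * r E + 4"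
  proof -
    have "r (Ax \<union> Ay) + r (Ax \<inter> Ay) \<le> r Ax + r Ay" using sub[OF AxE AyE] .
    moreover have "r (Bx \<union> By) + r (Bx \<inter> By) \<le> r Bx + r By" using sub[OF BxE ByE] .
    ultimately show ?thesis using s1 s2 s3 s4 sumx sumy by simp
  qed
  have K2: "r W1 + r (E - W2) + r W2 + r (E - W1) + 2 \<le> 2 * r E + 4"
  proof -
    have "r (Ax \<union> By) + r (Ax \<inter> By) \<le> r Ax + r By" using sub[OF AxE ByE] .
    moreover have "r (Bx \<union> Ay) + r (Bx \<inter> Ay) \<le> r Bx + r Ay" using sub[OF BxE AyE] .
    moreover have "r (insert y W1) = r W1 + 1" using Hadd[OF subH(6) yC] .
    moreover have "r (insert x W2) = r W2 + 1" using Hadd[OF subH(7) xC] .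
    ultimately show ?thesis using s5 s6 s7 s8 sumx sumy by simp
  qed
  have WE: "W \<subseteq> E" "W1 \<subseteq> E" "W2 \<subseteq> E" "W3 \<subseteq> E" "Q \<subseteq> E" using subH HE zC CE unfolding Q_def by auto
  have cEQ: "card (E - Q) \<ge> 2" using card_ge2[of Ax "E - Q" 2] s2 rAx by auto
  have cEW: "card (E - W) \<ge> 2" using card_ge2[of Bx "E - W" 2] s4 rBx by auto
  have cEW1: "card (E - W1) \<ge> 2" using card_ge2[of Bx "E - W1" 2] s8 rBx by auto
  have cEW2: "card (E - W2) \<ge> 2" using card_ge2[of Ax "E - W2" 2] s6 rAx by auto
  have rxyW: "r W + 1 \<le> r (insert x (insert y W))"
  proof -
    have "insert x (insert y W) \<subseteq> E" using WE xC yC CE by auto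
    hence "r (insert x W) \<le> r (insert x (insert y W))" using mono[of "insert x W" "insert x (insert y W)"] by auto
    thus ?thesis using Hadd[OF subH(5) xC] by simp
  qed
  have W1ne: "W1 \<noteq> {}"
  proof
    assume h: "W1 = {}"
    hence "W = PX" "W3 = QY" using cells by auto
    have "r Q = r W3 + 1" unfolding Q_def using Hadd[OF subH(8) zC] .
    hence "3 \<le> r Q" using \<open>W3 = QY\<close> fy2 rBy by simp
    hence "card Q \<ge> 2" using card_ge[OF WE(5), of 2] by simp
    hence cQ: "r E + 2 \<le> r Q + r (E - Q)" using C2[OF WE(5)] cEQ by simp
    have "card W \<ge> 2" using card_ge[OF WE(1), of 2] \<open>W = PX\<close> fx1 rAx by simp
    hence "r E + 2 \<le> r W + r (E - W)" using C2[OF WE(1)] cEW by simp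
    thus False using K1 cQ rxyW by linarith
  qed
  have W2ne: "W2 \<noteq> {}"
  proof
    assume h: "W2 = {}"
    hence "W = PY" "W3 = QX" using cells by auto
    have "r Q = r W3 + 1" unfolding Q_def using Hadd[OF subH(8) zC] .
    hence "3 \<le> r Q" using \<open>W3 = QX\<close> fx2 rBx by simp
    hence "card Q \<ge> 2" using card_ge[OF WE(5), of 2] by simp
    hence cQ: "r E + 2 \<le> r Q + r (E - Q)" using C2[OF WE(5)] cEQ by simp
    have "card W \<ge> 2" using card_ge[OF WE(1), of 2] \<open>W = PY\<close> fy1 rAy by simp
    hence "r E + 2 \<le> r W + r (E - W)" using C2[OF WE(1)] cEW by simp
    thus False using K1 cQ rxyW by linarith
  qed
  have neq: "E - W1 \<noteq> {}" "E - W2 \<noteq> {}" using cEW1 cEW2 by (metis card.empty not_numeral_le_zero)+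
  have l1: "r E + 1 \<le> r W1 + r (E - W1)" using C1[OF WE(2) W1ne neq(1)] .
  have l2: "r E + 1 \<le> r W2 + r (E - W2)" using C1[OF WE(3) W2ne neq(2)] .
  have cW1: "card W1 = 1"
  proof -
    have "\<not> card W1 \<ge> 2"
    proof
      assume "card W1 \<ge> 2"
      hence "r E + 2 \<le> r W1 + r (E - W1)" using C2[OF WE(2)] cEW1 by simp
      thus False using K2 l2 by linarith
    qed
    moreover have "card W1 \<noteq> 0" using W1ne finE[OF WE(2)] by auto
    ultimately show ?thesis by linarith
  qed
  have cW2: "card W2 = 1"
  proof -
    have "\<not> card W2 \<ge> 2"
    proof
      assume "card W2 \<ge> 2"
      hence "r E + 2 \<le> r W2 + r (E - W2)" using C2[OF WE(3)] cEW2 by simp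
      thus False using K2 l1 by linarith
    qed
    moreover have "card W2 \<noteq> 0" using W2ne finE[OF WE(3)] by auto
    ultimately show ?thesis by linarith
  qed
  have Wne: "W \<noteq> {}"
  proof
    assume "W = {}"
    hence "PX = W1" using cells by auto
    hence "r PX \<le> 1" using rcard[OF WE(2)] cW1 by simp
    thus False using fx1 rAx by simp
  qed
  have W3ne: "W3 \<noteq> {}"
  proof
    assume "W3 = {}"
    hence "QX = W2" using cells by auto
    hence "r QX \<le> 1" using rcard[OF WE(3)] cW2 by simp
    thus False using fx2 rBx by simp
  qed
  obtain w3 where w3: "w3 \<in> W3" using W3ne by auto
  have "r {w3} \<le> r W3" using mono[of "{w3}" W3] w3 WE by auto
  moreover have "r {w3} = 1" using r1[of w3] w3 WE by auto
  ultimately have "2 \<le> r Q" unfolding Q_def using Hadd[OF subH(8) zC] by simp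
  hence "card Q \<ge> 2" using card_ge[OF WE(5), of 2] by simp
  hence cQ: "r E + 2 \<le> r Q + r (E - Q)" using C2[OF WE(5)] cEQ by simp
  have K1': "r (insert x (insert y W)) + r (E - W) \<le> r E + 2" using K1 cQ by linarith
  have cW: "card W = 1"
  proof -
    have "\<not> card W \<ge> 2"
    proof
      assume "card W \<ge> 2"
      hence "r E + 2 \<le> r W + r (E - W)" using C2[OF WE(1)] cEW by simp
      thus False using K1' rxyW by linarith
    qed
    moreover have "card W \<noteq> 0" using Wne finE[OF WE(1)] by auto
    ultimately show ?thesis by linarith
  qed
  then obtain w where w: "W = {w}" using card_1_singletonE by blast
  have wE: "w \<in> E" "w \<in> H" using w WE subH by auto
  have "E - {w} \<noteq> {}" using cEW w by (metis card.empty not_numeral_le_zero)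
  hence "r E + 1 \<le> r {w} + r (E - {w})" using C1[of "{w}"] wE by auto
  hence "r (insert x (insert y {w})) \<le> 2" using K1' w r1[OF wE(1)] by simp
  moreover have "card PX = 2"
  proof -
    have "W \<inter> W1 \<subseteq> Ay \<inter> By \<inter> H" unfolding W_def W1_def PY_def QY_def by auto
    moreover have "y \<notin> H" unfolding Hd by auto
    ultimately have "W \<inter> W1 = {}" using Iy by auto
    thus ?thesis using cells(1) card_Un_disjoint[OF finE[OF WE(1)] finE[OF WE(2)]] cW cW1 by simp
  qed
  moreover have "card PY = 2"
  proof -
    have "W \<inter> W2 \<subseteq> Ax \<inter> Bx \<inter> H" unfolding W_def W2_def PX_def QX_def by auto
    moreover have "x \<notin> H" unfolding Hd by auto
    ultimately have "W \<inter> W2 = {}" using Ix by auto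
    thus ?thesis using cells(3) card_Un_disjoint[OF finE[OF WE(1)] finE[OF WE(3)]] cW cW2 by simp
  qed
  ultimately show ?thesis using wE unfolding PX_def PY_def by blast
qed

end

context M3 begin

lemma orient: assumes "sides x A B" "y \<in> E" shows "\<exists>A B. sides x A B \<and> y \<in> A"
proof -
  have "y \<in> A \<or> y \<in> B" using assms unfolding sides_def by auto
  thus ?thesis using assms(1) sides_sym by blast
qed

lemma merge: assumes "S \<subseteq> E" "T \<subseteq> E" "r S \<le> 2" "r T \<le> 2" "u \<in> S" "u \<in> T" "v \<in> S" "v \<in> T" "u \<noteq> v"
  shows "r (S \<union> T) \<le> 2"
proof -
  have "r (S \<union> T) + r (S \<inter> T) \<le> r S + r T" using sub[OF assms(1,2)] .
  moreover have "r {u, v} \<le> r (S \<inter> T)" using mono[of "{u,v}" "S \<inter> T"] assms by auto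
  moreover have "r {u, v} = 2" using r2[of u v] assms by auto
  ultimately show ?thesis using assms(3,4) by linarith
qed

lemma in_cl: assumes "S \<subseteq> E" "a \<in> S" "b \<in> S" "a \<noteq> b" "w \<in> E" "r {a, b, w} \<le> 2"
  shows "r (insert w S) = r S"
proof -
  have e: "S \<union> {a, b, w} = insert w S" using assms by auto
  have h: "r (S \<union> {a, b, w}) + r (S \<inter> {a, b, w}) \<le> r S + r {a, b, w}" using sub[of S "{a,b,w}"] assms by auto
  have h2: "r {a, b} \<le> r (S \<inter> {a, b, w})" using mono[of "{a,b}" "S \<inter> {a,b,w}"] assms by auto
  have h3: "r {a, b} = 2" using r2[of a b] assms by auto
  have h4: "r S \<le> r (insert w S)" using mono[of S "insert w S"] assms by auto
  note h5 = h[unfolded e]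
  show ?thesis using h2 h3 h4 h5 assms(6) by linarith
qed

lemma sidesE: "sides x A B \<Longrightarrow> x \<in> A \<and> x \<in> B \<and> A \<subseteq> E \<and> B \<subseteq> E \<and> A \<union> B = E \<and> A \<inter> B = {x}"
  unfolding sides_def by auto

lemma pair_line:
  assumes xC: "x \<in> C" and yC: "y \<in> C" and xy: "x \<noteq> y" and bx: "bad x" and by': "bad y"
  shows "\<exists>w\<in>E. w \<noteq> x \<and> w \<noteq> y \<and> r {x, y, w} \<le> 2"
proof -
  have xE: "x \<in> E" and yE: "y \<in> E" using xC yC CE by auto
  obtain A0 B0 where "sides x A0 B0" using bx unfolding bad_def by auto
  then obtain Ax Bx where sx: "sides x Ax Bx" and yAx: "y \<in> Ax" using orient yE by blast
  obtain A1 B1 where "sides y A1 B1" using by' unfolding bad_def by auto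
  then obtain Ay By where sy: "sides y Ay By" and xAy: "x \<in> Ay" using orient xE by blast
  note ex = sidesE[OF sx] and ey = sidesE[OF sy]
  show ?thesis
  proof (cases "\<exists>w\<in>Ax \<inter> C. w \<noteq> x \<and> w \<noteq> y")
    case True
    then obtain w where w: "w \<in> Ax \<inter> C" "w \<noteq> x" "w \<noteq> y" by auto
    have "r {x, y, w} \<le> 2" using coll[OF xC sx, of y w] w yAx yC by auto
    thus ?thesis using w CE by auto
  next
    case F1: False
    show ?thesis
    proof (cases "\<exists>w\<in>Ay \<inter> C. w \<noteq> x \<and> w \<noteq> y")
      case True
      then obtain w where w: "w \<in> Ay \<inter> C" "w \<noteq> x" "w \<noteq> y" by auto
      have "r {y, x, w} \<le> 2" using coll[OF yC sy, of x w] w xAy xC by auto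
      moreover have "{y, x, w} = {x, y, w}" by auto
      ultimately show ?thesis using w CE by auto
    next
      case F2: False
      have s1: "C - {y} \<subseteq> Bx \<inter> C" using F1 ex CE by auto
      have s2: "C - {x} \<subseteq> By \<inter> C" using F2 ey CE by auto
      have r1': "r (C - {y}) \<le> 2" using mono[of "C - {y}" "Bx \<inter> C"] s1 L2L(2)[OF xC sx] CE by auto
      have r2': "r (C - {x}) \<le> 2" using mono[of "C - {x}" "By \<inter> C"] s2 L2L(2)[OF yC sy] CE by auto
      have "r ((C - {y}) \<union> (C - {x})) + r ((C - {y}) \<inter> (C - {x})) \<le> r (C - {y}) + r (C - {x})"
        using sub[of "C - {y}" "C - {x}"] CE by auto
      moreover have "(C - {y}) \<union> (C - {x}) = C" using xy by auto
      moreover have "(C - {y}) \<inter> (C - {x}) = C - {x, y}" by auto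
      ultimately have rr: "r (C - {x, y}) \<le> 1" using r1' r2' RC by simp
      have "card (C - {x, y}) \<ge> 1"
      proof -
        have "card (C - {x, y}) = card C - card {x, y}" using card_Diff_subset[of "{x,y}" C] xC yC by auto
        thus ?thesis using cardC xy by simp
      qed
      then obtain z where z: "z \<in> C - {x, y}" by (metis card.empty ex_in_conv not_one_le_zero)
      have Cz: "C = {x, y, z}"
      proof -
        have "C - {x, y} \<subseteq> {z}"
        proof
          fix u assume u: "u \<in> C - {x, y}"
          show "u \<in> {z}"
          proof (rule ccontr)
            assume "u \<notin> {z}"
            hence "r {u, z} = 2" using r2[of u z] u z CE by auto
            moreover have "r {u, z} \<le> r (C - {x, y})" using mono[of "{u,z}" "C - {x,y}"] u z CE by auto
            ultimately show False using rr by simp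
          qed
        qed
        thus ?thesis using z xC yC by auto
      qed
      have zBx: "z \<in> Bx" using s1 z by auto
      have zBy: "z \<in> By" using s2 z by auto
      have "\<exists>w\<in>H. r (insert x (insert y {w})) \<le> 2"
        using triad[OF Cz xy _ _ sx yAx zBx sy xAy zBy] z by auto
      then obtain w where w: "w \<in> H" "r (insert x (insert y {w})) \<le> 2" by auto
      have "w \<in> E" "w \<noteq> x" "w \<noteq> y" using w xC yC unfolding H_def by auto
      thus ?thesis using w by auto
    qed
  qed
qed

end

context M3 begin

lemma merge3: assumes "a \<in> E" "b \<in> E" "c \<in> E" "d \<in> E" "e \<in> E" "f \<in> E"
  "r {a, b, c} \<le> 2" "r {d, e, f} \<le> 2" "u \<in> {a,b,c}" "u \<in> {d,e,f}" "v \<in> {a,b,c}" "v \<in> {d,e,f}" "u \<noteq> v"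
  "X \<subseteq> {a,b,c} \<union> {d,e,f}"
  shows "r X \<le> 2"
proof -
  have "r ({a,b,c} \<union> {d,e,f}) \<le> 2" using merge[of "{a,b,c}" "{d,e,f}" u v] assms by auto
  moreover have "r X \<le> r ({a,b,c} \<union> {d,e,f})" using mono[of X "{a,b,c} \<union> {d,e,f}"] assms by auto
  ultimately show ?thesis by simp
qed

lemma three_coll:
  assumes xC: "x \<in> C" and yC: "y \<in> C" and zC: "z \<in> C" and d: "x \<noteq> y" "y \<noteq> z" "x \<noteq> z"
    and bx: "bad x" and by': "bad y" and bz: "bad z"
  shows "r {x, y, z} \<le> 2"
proof (rule ccontr)
  assume nc: "\<not> r {x, y, z} \<le> 2"
  have xE: "x \<in> E" and yE: "y \<in> E" and zE: "z \<in> E" using xC yC zC CE by auto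
  obtain A0 B0 where "sides x A0 B0" using bx unfolding bad_def by auto
  then obtain Ax Bx where sx: "sides x Ax Bx" and yAx: "y \<in> Ax" using orient yE by blast
  obtain A1 B1 where "sides y A1 B1" using by' unfolding bad_def by auto
  then obtain Ay By where sy: "sides y Ay By" and xAy: "x \<in> Ay" using orient xE by blast
  obtain A2 B2 where "sides z A2 B2" using bz unfolding bad_def by auto
  then obtain Az Bz where sz: "sides z Az Bz" and xAz: "x \<in> Az" using orient xE by blast
  note ex = sidesE[OF sx] and ey = sidesE[OF sy] and ez = sidesE[OF sz]
  have zBx: "z \<in> Bx"
  proof (rule ccontr)
    assume "z \<notin> Bx" hence "z \<in> Ax" using ex zE by blast
    thus False using coll[OF xC sx, of y z] yAx yC zC nc by blast
  qed
  have zBy: "z \<in> By"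
  proof (rule ccontr)
    assume "z \<notin> By" hence "z \<in> Ay" using ey zE by blast
    hence "r {y, x, z} \<le> 2" using coll[OF yC sy, of x z] xAy xC zC by blast
    moreover have "{y, x, z} = {x, y, z}" by auto
    ultimately show False using nc by simp
  qed
  have yBz: "y \<in> Bz"
  proof (rule ccontr)
    assume "y \<notin> Bz" hence "y \<in> Az" using ez yE by blast
    hence "r {z, x, y} \<le> 2" using coll[OF zC sz, of x y] xAz xC yC by blast
    moreover have "{z, x, y} = {x, y, z}" by auto
    ultimately show False using nc by simp
  qed
  have yBx: "y \<notin> Bx" using ex yAx d by (metis IntI singletonD)
  have zAx: "z \<notin> Ax" using ex zBx d by (metis IntI singletonD)
  have sub1: "Bx \<inter> C \<subseteq> {x, z}"
  proof
    fix w assume w: "w \<in> Bx \<inter> C"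
    show "w \<in> {x, z}"
    proof (rule ccontr)
      assume wn: "w \<notin> {x, z}"
      have wy: "w \<noteq> y" using w yBx by auto
      have wE: "w \<in> E" using w CE by auto
      have l1: "r {x, z, w} \<le> 2" using coll[OF xC sides_sym[OF sx], of z w] w zBx zC by blast
      have "w \<in> Ay \<or> w \<in> By" using ey wE by auto
      thus False
      proof
        assume "w \<in> Ay"
        hence "r {y, x, w} \<le> 2" using coll[OF yC sy, of x w] xAy xC w by auto
        hence "r {x, y, z} \<le> 2" using merge3[of y x w x z w x w "{x,y,z}"] xE yE zE wE l1 wn by auto
        thus False using nc by simp
      next
        assume "w \<in> By"
        hence "r {y, z, w} \<le> 2" using coll[OF yC sides_sym[OF sy], of z w] zBy zC w by auto
        hence "r {x, y, z} \<le> 2" using merge3[of y z w x z w z w "{x,y,z}"] xE yE zE wE l1 wn by auto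
        thus False using nc by simp
      qed
    qed
  qed
  have sub2: "Ax \<inter> C \<subseteq> {x, y}"
  proof
    fix w assume w: "w \<in> Ax \<inter> C"
    show "w \<in> {x, y}"
    proof (rule ccontr)
      assume wn: "w \<notin> {x, y}"
      have wz: "w \<noteq> z" using w zAx by auto
      have wE: "w \<in> E" using w CE by auto
      have l1: "r {x, y, w} \<le> 2" using coll[OF xC sx, of y w] yAx yC w by auto
      have "w \<in> Az \<or> w \<in> Bz" using ez wE by auto
      thus False
      proof
        assume "w \<in> Az"
        hence "r {z, x, w} \<le> 2" using coll[OF zC sz, of x w] xAz xC w by auto
        hence "r {x, y, z} \<le> 2" using merge3[of z x w x y w x w "{x,y,z}"] xE yE zE wE l1 wn by auto
        thus False using nc by simp
      next
        assume "w \<in> Bz"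
        hence "r {z, y, w} \<le> 2" using coll[OF zC sides_sym[OF sz], of y w] yBz yC w by auto
        hence "r {x, y, z} \<le> 2" using merge3[of z y w x y w y w "{x,y,z}"] xE yE zE wE l1 wn by auto
        thus False using nc by simp
      qed
    qed
  qed
  have Cxyz: "C = {x, y, z}" using sub1 sub2 ex CE xC yC zC by auto
  have T1: "card (Ax \<inter> H) = 2 \<and> (\<exists>w\<in>H. r (insert x (insert y {w})) \<le> 2)"
    using triad[OF Cxyz d sx yAx zBx sy xAy zBy] by auto
  have Cxzy: "C = {x, z, y}" using Cxyz by auto
  have T2: "card (Bx \<inter> H) = 2 \<and> (\<exists>w\<in>H. r (insert x (insert z {w})) \<le> 2)"
    using triad[OF Cxzy d(3) d(2)[symmetric] d(1) sides_sym[OF sx] zBx yAx sz xAz yBz] by auto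
  have Cyzx: "C = {y, z, x}" using Cxyz by auto
  have T3: "\<exists>w\<in>H. r (insert y (insert z {w})) \<le> 2"
    using triad[OF Cyzx d(2) d(3)[symmetric] d(1)[symmetric] sides_sym[OF sy] zBy xAy sides_sym[OF sz] yBz xAz] by auto
  obtain w1 where w1: "w1 \<in> H" "r {x, y, w1} \<le> 2" using T1 by auto
  obtain w2 where w2: "w2 \<in> H" "r {x, z, w2} \<le> 2" using T2 by auto
  obtain w3 where w3: "w3 \<in> H" "r {y, z, w3} \<le> 2" using T3 by auto
  have wE: "w1 \<in> E" "w2 \<in> E" "w3 \<in> E" using w1 w2 w3 HE by auto
  have wn: "w1 \<notin> C" "w2 \<notin> C" "w3 \<notin> C" using w1 w2 w3 unfolding H_def by auto
  have d12: "w1 \<noteq> w2"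
  proof
    assume "w1 = w2"
    hence "r {x, y, z} \<le> 2" using merge3[of x y w1 x z w1 x w1 "{x,y,z}"] xE yE zE wE w1 w2 wn xC by auto
    thus False using nc by simp
  qed
  have d13: "w1 \<noteq> w3"
  proof
    assume "w1 = w3"
    hence "r {x, y, z} \<le> 2" using merge3[of x y w1 y z w1 y w1 "{x,y,z}"] xE yE zE wE w1 w3 wn yC by auto
    thus False using nc by simp
  qed
  have d23: "w2 \<noteq> w3"
  proof
    assume "w2 = w3"
    hence "r {x, y, z} \<le> 2" using merge3[of x z w2 y z w2 z w2 "{x,y,z}"] xE yE zE wE w2 w3 wn zC by auto
    thus False using nc by simp
  qed
  define T where "T = {w1, w2, w3}"
  have TH: "T \<subseteq> H" using w1 w2 w3 unfolding T_def by auto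
  have cT: "card T = 3" using d12 d13 d23 unfolding T_def by auto
  have rCT: "r (C \<union> T) = r C"
  proof (rule closure_union)
    show "C \<subseteq> E" using CE .
    show "T \<subseteq> E" using TH HE by auto
    show "\<forall>e\<in>T. r (insert e C) = r C"
    proof
      fix e assume "e \<in> T"
      thus "r (insert e C) = r C"
        using in_cl[OF CE xC yC d(1) wE(1) w1(2)] in_cl[OF CE xC zC d(3) wE(2) w2(2)]
          in_cl[OF CE yC zC d(2) wE(3) w3(2)] unfolding T_def by auto
    qed
  qed
  have rT: "r T \<le> 2"
  proof -
    have "r (H \<union> (C \<union> T)) + r (H \<inter> (C \<union> T)) \<le> r H + r (C \<union> T)"
      using sub[of H "C \<union> T"] HE CE TH by auto
    moreover have "H \<union> (C \<union> T) = E" "H \<inter> (C \<union> T) = T" using TH CE unfolding H_def by auto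
    ultimately show ?thesis using rH_eq rCT RC by simp
  qed
  have HU: "H = (Ax \<inter> H) \<union> (Bx \<inter> H)" using ex HE by auto
  have "card H \<le> card (Ax \<inter> H) + card (Bx \<inter> H)" using HU card_Un_le by metis
  hence cH: "card H \<le> 4" using T1 T2 by simp
  have n4: "r E \<ge> 4" using sx unfolding sides_def by auto
  have finH: "finite H" using finE[OF HE] .
  have "card (H - T) = card H - card T" using card_Diff_subset[OF _ TH] finite_subset[OF TH finH] by auto
  hence cHT: "card (H - T) \<le> 1" using cH cT by simp
  have EU: "E = (C \<union> T) \<union> (H - T)" using CE TH unfolding H_def by auto
  have "H - T = {} \<or> (\<exists>g. H - T = {g})"
  proof -
    have "card (H - T) = 0 \<or> card (H - T) = 1" using cHT by auto
    moreover have "finite (H - T)" using finH by auto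
    ultimately show ?thesis using card_1_singleton_iff by auto
  qed
  thus False
  proof
    assume "H - T = {}"
    hence "E = C \<union> T" using EU by auto
    thus False using rCT RC n4 by simp
  next
    assume "\<exists>g. H - T = {g}"
    then obtain g where g: "H - T = {g}" by auto
    have gE: "g \<in> E" using g HE by auto
    have e: "E - {g} = C \<union> T" using EU g unfolding H_def by auto
    have "E - {g} \<noteq> {}" using e xC by auto
    hence "r E + 1 \<le> r {g} + r (E - {g})" using C1[of "{g}"] gE by auto
    thus False using e rCT RC n4 r1[OF gE] by simp
  qed
qed

end

context M3 begin

lemma rx_eq: assumes "x \<in> E" "Z \<subseteq> E" shows "contract_rank r x Z + 1 = r (insert x Z)"
proof -
  have "r {x} \<le> r (insert x Z)" using mono[of "{x}" "insert x Z"] assms by auto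
  thus ?thesis using r1[OF assms(1)] unfolding contract_rank_def by simp
qed

lemma simp_set_props:
  assumes xE: "x \<in> E"
  defines "rx \<equiv> contract_rank r x" and "E' \<equiv> E - {x}"
  shows "simp_set E' rx \<subseteq> E' \<and> (\<forall>s\<in>simp_set E' rx. \<forall>t\<in>simp_set E' rx. s \<noteq> t \<longrightarrow> rx {s, t} = 2)
     \<and> (\<forall>y\<in>E'. \<exists>s\<in>simp_set E' rx. rx {y, s} = 1)"
proof -
  have rx1: "\<forall>y\<in>E'. rx {y} = 1"
  proof
    fix y assume y: "y \<in> E'"
    have "rx {y} + 1 = r {x, y}" using rx_eq[OF xE, of "{y}"] y unfolding rx_def E'_def by auto
    thus "rx {y} = 1" using r2[of x y] y xE unfolding E'_def by auto
  qed
  define F where "F = {S. S \<subseteq> E' \<and> (\<forall>s\<in>S. rx {s} = 1) \<and> (\<forall>s\<in>S. \<forall>t\<in>S. s \<noteq> t \<longrightarrow> rx {s, t} = 2)}"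
  have finF: "finite F"
  proof -
    have "F \<subseteq> Pow E'" unfolding F_def by auto
    moreover have "finite E'" using fin unfolding E'_def by auto
    ultimately show ?thesis using finite_subset by blast
  qed
  have "{} \<in> F" unfolding F_def by auto
  hence Fne: "F \<noteq> {}" by auto
  define m where "m = Max (card ` F)"
  have "m \<in> card ` F" using Max_in[of "card ` F"] finF Fne unfolding m_def by auto
  then obtain S where SF: "S \<in> F" and cS: "card S = m" by auto
  have maxS: "\<forall>T\<in>F. card T \<le> card S" using Max_ge[of "card ` F"] finF cS unfolding m_def by auto
  have SE': "S \<subseteq> E'" using SF unfolding F_def by auto
  have finS: "finite S" using SE' fin finite_subset unfolding E'_def by blast
  have P4: "\<forall>y\<in>E'. \<exists>s\<in>S. rx {y, s} = 1"
  proof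
    fix y assume y: "y \<in> E'"
    show "\<exists>s\<in>S. rx {y, s} = 1"
    proof (cases "y \<in> S")
      case True
      have "rx {y, y} = 1" using rx1 y by simp
      thus ?thesis using True by blast
    next
      case False
      have "card (insert y S) = card S + 1" using False finS by auto
      hence "insert y S \<notin> F" using maxS by fastforce
      moreover have "insert y S \<subseteq> E'" using y SE' by auto
      moreover have "\<forall>s\<in>insert y S. rx {s} = 1" using rx1 y SE' by auto
      ultimately have "\<not> (\<forall>s\<in>insert y S. \<forall>t\<in>insert y S. s \<noteq> t \<longrightarrow> rx {s, t} = 2)"
        unfolding F_def by auto
      moreover have "\<forall>s\<in>S. \<forall>t\<in>S. s \<noteq> t \<longrightarrow> rx {s, t} = 2" using SF unfolding F_def by auto
      ultimately obtain s where s: "s \<in> S" "s \<noteq> y" "rx {y, s} \<noteq> 2"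
        by (metis insert_commute insert_iff)
      have sE: "s \<in> E" "y \<in> E" "s \<noteq> x" "y \<noteq> x" using s SE' y unfolding E'_def by auto
      have a: "rx {y, s} + 1 = r (insert x {y, s})" using rx_eq[OF xE, of "{y,s}"] sE unfolding rx_def by auto
      have c1: "card {y, s} \<le> 2" by (simp add: card_insert_if)
      have c2: "card (insert x {y, s}) \<le> card {y, s} + 1" by (simp add: card_insert_if)
      have "r (insert x {y, s}) \<le> card (insert x {y, s})" using rcard[of "insert x {y,s}"] sE xE by auto
      hence "r (insert x {y, s}) \<le> 3" using c1 c2 by linarith
      moreover have "r {x, y} \<le> r (insert x {y, s})" using mono[of "{x,y}" "insert x {y,s}"] sE xE by auto
      moreover have "r {x, y} = 2" using r2 sE xE by auto
      ultimately have "rx {y, s} = 1" using a s(3) by linarith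
      thus ?thesis using s by auto
    qed
  qed
  have "\<exists>S. S \<subseteq> E' \<and> (\<forall>x\<in>S. rx {x} = 1) \<and> (\<forall>x\<in>S. \<forall>y\<in>S. x \<noteq> y \<longrightarrow> rx {x, y} = 2)
      \<and> (\<forall>x\<in>E'. rx {x} = 1 \<longrightarrow> (\<exists>y\<in>S. rx {x, y} = 1))"
    using SF P4 unfolding F_def by blast
  hence "let S = simp_set E' rx in S \<subseteq> E' \<and> (\<forall>x\<in>S. rx {x} = 1) \<and> (\<forall>x\<in>S. \<forall>y\<in>S. x \<noteq> y \<longrightarrow> rx {x, y} = 2)
      \<and> (\<forall>x\<in>E'. rx {x} = 1 \<longrightarrow> (\<exists>y\<in>S. rx {x, y} = 1))"
    unfolding simp_set_def Let_def by (rule someI_ex)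
  thus ?thesis using rx1 unfolding Let_def by blast
qed

end

context M3 begin

lemma notvc_bad: assumes xE: "x \<in> E" and nv: "\<not> vert_contractible E r x" shows "bad x"
proof -
  define rx where "rx = contract_rank r x"
  define E' where "E' = E - {x}"
  define S where "S = simp_set E' rx"
  have SP: "S \<subseteq> E'" "\<forall>s\<in>S. \<forall>t\<in>S. s \<noteq> t \<longrightarrow> rx {s, t} = 2" "\<forall>y\<in>E'. \<exists>s\<in>S. rx {y, s} = 1"
    using simp_set_props[OF xE] unfolding S_def rx_def E'_def by auto
  have rxE: "\<And>Z. Z \<subseteq> E \<Longrightarrow> rx Z + 1 = r (insert x Z)" using rx_eq[OF xE] unfolding rx_def by auto
  have SE: "S \<subseteq> E" using SP(1) unfolding E'_def by auto
  have "\<not> three_connected S rx" using nv xE unfolding vert_contractible_def S_def rx_def E'_def by auto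
  then obtain k X where k: "1 \<le> k" "k < 3" and ks: "k_separation S rx k X"
    unfolding three_connected_def by auto
  have XS: "X \<subseteq> S" and cX: "card X \<ge> k" and cSX: "card (S - X) \<ge> k"
    and ineq: "rx X + rx (S - X) < rx S + k" using ks unfolding k_separation_def by auto
  define Xs where "Xs = {y \<in> E'. \<exists>a\<in>X. rx {y, a} = 1}"
  define Ys where "Ys = E' - Xs"
  define A where "A = insert x Xs"
  define B where "B = insert x Ys"
  have xE': "x \<notin> E'" unfolding E'_def by auto
  have XsE: "Xs \<subseteq> E'" "Ys \<subseteq> E'" unfolding Xs_def Ys_def by auto
  have X_Xs: "X \<subseteq> Xs"
  proof
    fix a assume a: "a \<in> X"
    hence "a \<in> E'" using XS SP(1) by auto
    moreover have "rx {a, a} + 1 = r {x, a}" using rxE[of "{a}"] \<open>a \<in> E'\<close> unfolding E'_def by auto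
    moreover have "r {x, a} = 2" using r2[of x a] \<open>a \<in> E'\<close> xE unfolding E'_def by auto
    ultimately have "rx {a, a} = 1" by simp
    thus "a \<in> Xs" using a \<open>a \<in> E'\<close> unfolding Xs_def by blast
  qed
  have SX_Ys: "S - X \<subseteq> Ys"
  proof
    fix s assume s: "s \<in> S - X"
    have "s \<notin> Xs"
    proof
      assume "s \<in> Xs"
      then obtain a where a: "a \<in> X" "rx {s, a} = 1" unfolding Xs_def by auto
      have "a \<noteq> s" using a s by auto
      hence "rx {s, a} = 2" using SP(2) a s XS by auto
      thus False using a by simp
    qed
    thus "s \<in> Ys" using s SP(1) unfolding Ys_def by auto
  qed
  have EE: "E' \<subseteq> E" unfolding E'_def by auto
  have rA: "r A = r (insert x X)"
  proof -
    have "r (insert x X \<union> Xs) = r (insert x X)"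
    proof (rule closure_union)
      show "insert x X \<subseteq> E" using xE XS SE by auto
      show "Xs \<subseteq> E" using XsE EE by auto
      show "\<forall>e\<in>Xs. r (insert e (insert x X)) = r (insert x X)"
      proof
        fix y assume y: "y \<in> Xs"
        then obtain a where a: "a \<in> X" "rx {y, a} = 1" unfolding Xs_def by auto
        have aE: "a \<in> E" "a \<noteq> x" "y \<in> E" using a XS SP(1) y XsE unfolding E'_def by auto
        have "rx {y, a} + 1 = r (insert x {y, a})" using rxE[of "{y,a}"] aE by auto
        moreover have "insert x {y, a} = {x, a, y}" by auto
        ultimately have "r {x, a, y} \<le> 2" using a by simp
        thus "r (insert y (insert x X)) = r (insert x X)"
          using in_cl[of "insert x X" x a y] xE XS SE a aE by auto
      qed
    qed
    moreover have "insert x X \<union> Xs = A" using X_Xs unfolding A_def by auto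
    ultimately show ?thesis by simp
  qed
  have rB: "r B = r (insert x (S - X))"
  proof -
    have "r (insert x (S - X) \<union> Ys) = r (insert x (S - X))"
    proof (rule closure_union)
      show "insert x (S - X) \<subseteq> E" using xE SE by auto
      show "Ys \<subseteq> E" using XsE EE by auto
      show "\<forall>e\<in>Ys. r (insert e (insert x (S - X))) = r (insert x (S - X))"
      proof
        fix y assume y: "y \<in> Ys"
        hence yE': "y \<in> E'" unfolding Ys_def by auto
        then obtain s where s: "s \<in> S" "rx {y, s} = 1" using SP(3) by auto
        have "s \<notin> X" using s y yE' unfolding Ys_def Xs_def by auto
        have sE: "s \<in> E" "s \<noteq> x" "y \<in> E" using s SP(1) yE' unfolding E'_def by auto
        have "rx {y, s} + 1 = r (insert x {y, s})" using rxE[of "{y,s}"] sE by auto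
        moreover have "insert x {y, s} = {x, s, y}" by auto
        ultimately have "r {x, s, y} \<le> 2" using s by simp
        thus "r (insert y (insert x (S - X))) = r (insert x (S - X))"
          using in_cl[of "insert x (S - X)" x s y] xE SE s sE \<open>s \<notin> X\<close> by auto
      qed
    qed
    moreover have "insert x (S - X) \<union> Ys = B" using SX_Ys unfolding B_def by auto
    ultimately show ?thesis by simp
  qed
  have rS: "rx S + 1 \<le> r E" using rxE[OF SE] r_le_E[of "insert x S"] xE SE by auto
  have e1: "rx X + 1 = r (insert x X)" using rxE[of X] XS SE by auto
  have e2: "rx (S - X) + 1 = r (insert x (S - X))" using rxE[of "S - X"] SE by auto
  have sum: "r A + r B < r E + 1 + k" using ineq rA rB e1 e2 rS by linarith
  have AE: "A \<subseteq> E" "B \<subseteq> E" using XsE EE xE unfolding A_def B_def by auto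
  have AU: "A \<union> B = E" using xE XsE unfolding A_def B_def Ys_def E'_def by auto
  have AI: "A \<inter> B = {x}" using xE' unfolding A_def B_def Ys_def by auto
  have finS: "finite S" using finE[OF SE] .
  have "k = 1 \<or> k = 2" using k by auto
  thus ?thesis
  proof
    assume k1: "k = 1"
    obtain a where a: "a \<in> X" using cX k1 by (metis card.empty ex_in_conv not_one_le_zero)
    obtain b where b: "b \<in> S - X" using cSX k1 by (metis card.empty ex_in_conv not_one_le_zero)
    have bYs: "b \<in> Ys" using b SX_Ys by auto
    have EA: "E - A = Ys" using AU AI xE' XsE unfolding A_def B_def Ys_def by auto
    have aA: "a \<in> A" "a \<noteq> x" using a X_Xs XsE xE' unfolding A_def by auto
    have finYs: "finite Ys" using finE[of Ys] XsE EE by auto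
    show ?thesis
    proof (cases "card Ys \<ge> 2")
      case True
      have "card {x, a} \<le> card A" using card_mono[of A "{x,a}"] finE[OF AE(1)] aA unfolding A_def by auto
      hence "card A \<ge> 2" using aA by simp
      hence "r E + 2 \<le> r A + r (E - A)" using C2[OF AE(1)] EA True by simp
      hence "r E + 2 \<le> r A + r Ys" using EA by simp
      moreover have "r Ys \<le> r B" using mono[of Ys B] AE unfolding B_def by auto
      ultimately have False using sum k1 by linarith
      thus ?thesis ..
    next
      case False
      have "card Ys \<noteq> 0" using bYs finYs by auto
      hence "card Ys = 1" using False by linarith
      then obtain y where y: "Ys = {y}" using card_1_singletonE by blast
      have yE: "y \<in> E" "y \<noteq> x" using y XsE EE xE' by auto
      have "B = {x, y}" unfolding B_def y by simp
      hence "r B = 2" using r2[of x y] yE xE by auto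
      moreover have "E - {y} = A" using EA y AE(1) by auto
      moreover have "E - {y} \<noteq> {}" using xE yE by auto
      ultimately have "r E + 1 \<le> 1 + r A" using C1[of "{y}"] yE r1[of y] by auto
      hence False using sum k1 \<open>r B = 2\<close> by linarith
      thus ?thesis ..
    qed
  next
    assume k2: "k = 2"
    have "r A \<ge> 3"
    proof -
      have fX: "finite X" using finE[of X] XS SE by auto
      have "\<not> card X \<le> Suc 0" using cX k2 by simp
      hence "\<not> (\<forall>a\<in>X. \<forall>b\<in>X. a = b)" using card_le_Suc0_iff_eq[OF fX] by blast
      then obtain a b where ab: "a \<in> X" "b \<in> X" "a \<noteq> b" by blast
      have "rx {a, b} = 2" using SP(2) ab XS by auto
      moreover have "rx {a, b} + 1 = r (insert x {a, b})" using rxE[of "{a,b}"] ab XS SE by auto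
      moreover have "r (insert x {a, b}) \<le> r (insert x X)" using mono[of "insert x {a,b}" "insert x X"] ab XS SE xE by auto
      ultimately show ?thesis using rA by simp
    qed
    moreover have "r B \<ge> 3"
    proof -
      have fX: "finite (S - X)" using finS by auto
      have "\<not> card (S - X) \<le> Suc 0" using cSX k2 by simp
      hence "\<not> (\<forall>a\<in>S - X. \<forall>b\<in>S - X. a = b)" using card_le_Suc0_iff_eq[OF fX] by blast
      then obtain a b where ab: "a \<in> S - X" "b \<in> S - X" "a \<noteq> b" by blast
      have "rx {a, b} = 2" using SP(2) ab by auto
      moreover have "rx {a, b} + 1 = r (insert x {a, b})" using rxE[of "{a,b}"] ab SE by auto
      moreover have "r (insert x {a, b}) \<le> r (insert x (S - X))" using mono[of "insert x {a,b}" "insert x (S - X)"] ab SE xE by auto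
      ultimately show ?thesis using rB by simp
    qed
    ultimately have "sides x A B" using AE AU AI sum k2 unfolding sides_def by auto
    thus ?thesis unfolding bad_def by auto
  qed
qed

end

theorem proposition5p16:
  fixes E :: "'a set" and r :: "'a set \<Rightarrow> nat" and C :: "'a set"
  assumes "matroid E r"
    and "three_connected E r"
    and "simple E r"
    and "r E \<ge> 3"
    and "cocircuit E r C"
    and "r C = 3"
  shows "((\<exists>a\<in>C. \<exists>b\<in>C. a \<noteq> b \<and> \<not> vert_contractible E r a \<and> \<not> vert_contractible E r b)
            \<longrightarrow> (\<exists>L. nontrivial_line E r L \<and> {e\<in>C. \<not> vert_contractible E r e} \<subseteq> L))
         \<and> (\<exists>e\<in>C. vert_contractible E r e)"
proof -
  interpret M3 E r C using assms unfolding M3_def M3_axioms_def mat_def by auto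
  have nb: "\<And>e. e \<in> C \<Longrightarrow> \<not> vert_contractible E r e \<Longrightarrow> bad e" using notvc_bad CE by auto
  have P1: "(\<exists>a\<in>C. \<exists>b\<in>C. a \<noteq> b \<and> \<not> vert_contractible E r a \<and> \<not> vert_contractible E r b)
            \<longrightarrow> (\<exists>L. nontrivial_line E r L \<and> {e\<in>C. \<not> vert_contractible E r e} \<subseteq> L)"
  proof
    assume "\<exists>a\<in>C. \<exists>b\<in>C. a \<noteq> b \<and> \<not> vert_contractible E r a \<and> \<not> vert_contractible E r b"
    then obtain a b where ab: "a \<in> C" "b \<in> C" "a \<noteq> b" "bad a" "bad b" using nb by blast
    obtain w where w: "w \<in> E" "w \<noteq> a" "w \<noteq> b" "r {a, b, w} \<le> 2" using pair_line[OF ab(1,2,3,4,5)] by auto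
    have abE: "a \<in> E" "b \<in> E" using ab CE by auto
    define L where "L = {e \<in> E. r {a, b, e} \<le> 2}"
    have r2ab: "r {a, b} = 2" using r2 abE ab by auto
    have aL: "a \<in> L" "b \<in> L" "w \<in> L" using abE r2ab w unfolding L_def by (auto simp: insert_commute)
    have LE: "L \<subseteq> E" unfolding L_def by auto
    have rL: "r L = 2"
    proof -
      have "r ({a, b} \<union> L) = r {a, b}"
      proof (rule closure_union)
        show "{a, b} \<subseteq> E" using abE by auto
        show "L \<subseteq> E" using LE .
        show "\<forall>e\<in>L. r (insert e {a, b}) = r {a, b}"
        proof
          fix e assume e: "e \<in> L"
          have "insert e {a, b} = {a, b, e}" by auto
          hence "r (insert e {a, b}) \<le> 2" using e unfolding L_def by auto
          moreover have "r {a, b} \<le> r (insert e {a, b})" using mono[of "{a,b}" "insert e {a,b}"] e LE abE by auto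
          ultimately show "r (insert e {a, b}) = r {a, b}" using r2ab by simp
        qed
      qed
      moreover have "{a, b} \<union> L = L" using aL by auto
      ultimately show ?thesis using r2ab by simp
    qed
    have flat: "flat E r L" unfolding flat_def
    proof (intro conjI ballI)
      show "L \<subseteq> E" using LE .
      fix e assume e: "e \<in> E - L"
      hence "\<not> r {a, b, e} \<le> 2" unfolding L_def by auto
      moreover have "r {a, b, e} \<le> r (insert e L)" using mono[of "{a,b,e}" "insert e L"] aL e LE by auto
      ultimately show "r L < r (insert e L)" using rL by simp
    qed
    have "card {a, b, w} = 3" using ab w by auto
    moreover have "card {a, b, w} \<le> card L" using card_mono[OF finE[OF LE]] aL by auto
    ultimately have cL: "card L \<ge> 3" by simp
    have sub: "{e\<in>C. \<not> vert_contractible E r e} \<subseteq> L"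
    proof
      fix e assume "e \<in> {e\<in>C. \<not> vert_contractible E r e}"
      hence e: "e \<in> C" "bad e" using nb by auto
      show "e \<in> L"
      proof (cases "e = a \<or> e = b")
        case True thus ?thesis using aL by auto
      next
        case False
        hence "r {a, b, e} \<le> 2" using three_coll[OF ab(1,2) e(1) ab(3) _ _ ab(4,5) e(2)] by auto
        thus ?thesis using e CE unfolding L_def by auto
      qed
    qed
    show "\<exists>L. nontrivial_line E r L \<and> {e\<in>C. \<not> vert_contractible E r e} \<subseteq> L"
      using flat rL cL sub unfolding nontrivial_line_def by auto
  qed
  have P2: "\<exists>e\<in>C. vert_contractible E r e"
  proof (rule ccontr)
    assume "\<not> (\<exists>e\<in>C. vert_contractible E r e)"
    hence allbad: "\<forall>e\<in>C. bad e" using nb by auto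
    have "C \<noteq> {}" using cardC by auto
    then obtain x where x: "x \<in> C" by auto
    have xE: "x \<in> E" using x CE by auto
    have "\<exists>y\<in>C. r (insert y {x}) \<noteq> r {x}"
    proof (rule ccontr)
      assume "\<not> (\<exists>y\<in>C. r (insert y {x}) \<noteq> r {x})"
      hence "r ({x} \<union> C) = r {x}" using closure_union[of "{x}" C] xE CE by auto
      moreover have "{x} \<union> C = C" using x by auto
      ultimately show False using RC r1[OF xE] by simp
    qed
    then obtain y where y: "y \<in> C" "r (insert y {x}) \<noteq> r {x}" by auto
    have xy: "x \<noteq> y" using y by auto
    have yE: "y \<in> E" using y CE by auto
    have "\<exists>z\<in>C. r (insert z {x, y}) \<noteq> r {x, y}"
    proof (rule ccontr)
      assume "\<not> (\<exists>z\<in>C. r (insert z {x, y}) \<noteq> r {x, y})"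
      hence "r ({x, y} \<union> C) = r {x, y}" using closure_union[of "{x, y}" C] xE yE CE by auto
      moreover have "{x, y} \<union> C = C" using x y by auto
      ultimately show False using RC r2[OF xE yE xy] by simp
    qed
    then obtain z where z: "z \<in> C" "r (insert z {x, y}) \<noteq> r {x, y}" by auto
    have xz: "x \<noteq> z" "y \<noteq> z"
    proof -
      show "x \<noteq> z"
      proof
        assume "x = z" hence "insert z {x, y} = {x, y}" by auto
        thus False using z by simp
      qed
      show "y \<noteq> z"
      proof
        assume "y = z" hence "insert z {x, y} = {x, y}" by auto
        thus False using z by simp
      qed
    qed
    have "r {x, y, z} \<le> 2" using three_coll[OF x y(1) z(1) xy xz(2) xz(1)] allbad x y z by auto
    moreover have "insert z {x, y} = {x, y, z}" by auto
    moreover have "r {x, y} \<le> r {x, y, z}" using mono[of "{x,y}" "{x,y,z}"] xE yE z CE by auto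
    ultimately show False using z r2[OF xE yE xy] by simp
  qed
  show ?thesis using P1 P2 by blast
qed

end
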